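(* Let $k\ge2$, $n\ge1$ be integers, let $\bar{\mathcal{P}}\in\mathbb{R}^{[k,n]}$ be a columnwise-substochastic tensor, $\mathbf{v}\in\mathbb{R}^n$ a stochastic vector and $\alpha\in[0,1)$. Then the MLPPR system $(\mathbf{e}^T\mathbf{y})^{k-2}\mathbf{y}-\alpha\bar{\mathcal{P}}\mathbf{y}^{k-1}=\mathbf{v}$ has at least one nonzero solution $\mathbf{y}_*\in\mathbb{R}^n_+$.
   Context: For $\mathcal{P}\in\mathbb{R}^{[k,n]}$ (real tensors of order $k$, dimension $n$) and $\mathbf{y}\in\mathbb{R}^n$, $(\mathcal{P}\mathbf{y}^{k-1})_i=\sum_{i_2,\dots,i_k}p_{i i_2\dots i_k}y_{i_2}\cdots y_{i_k}$. $\bar{\mathcal{P}}$ is columnwise-substochastic if its entries are nonnegative and $\sum_{i}\bar p_{i i_2\dots i_k}\le1$ for all $i_2,\dots,i_k$. $\mathbf{e}$ is the all-ones vector; a stochastic vector is nonnegative with entries summing to $1$. The MLPPR system $(I\circ\mathbf{e}^{\circ(k-2)}-\alpha\bar{\mathcal{P}})\mathbf{y}^{k-1}=\mathbf{v}$ is exactly $(\mathbf{e}^T\mathbf{y})^{k-2}\mathbf{y}-\alpha\bar{\mathcal{P}}\mathbf{y}^{k-1}=\mathbf{v}$. *)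

theory Defs
  imports Complex_Main
begin

text \<open>Dimension n is the cardinality of a finite index type 'n.
  A tensor of order k and dimension n is a function on index lists; only its
  values on lists of length k are relevant. Entry p_{i i_2 ... i_k} is P (i # [i_2,...,i_k]).\<close>

definition index_tuples :: "nat \<Rightarrow> ('n::finite) list set" where
  "index_tuples m = {js. length js = m}"

definition tensor_apply :: "nat \<Rightarrow> (('n::finite) list \<Rightarrow> real) \<Rightarrow> ('n \<Rightarrow> real) \<Rightarrow> 'n \<Rightarrow> real" where
  "tensor_apply k P y i = (\<Sum>js\<in>index_tuples (k - 1). P (i # js) * (\<Prod>j\<leftarrow>js. y j))"

definition columnwise_substochastic :: "nat \<Rightarrow> (('n::finite) list \<Rightarrow> real) \<Rightarrow> bool" where
  "columnwise_substochastic k P \<longleftrightarrow>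
     (\<forall>i js. js \<in> index_tuples (k - 1) \<longrightarrow> P (i # js) \<ge> 0) \<and>
     (\<forall>js \<in> index_tuples (k - 1). (\<Sum>i\<in>UNIV. P (i # js)) \<le> 1)"

definition stochastic_vector :: "('n::finite \<Rightarrow> real) \<Rightarrow> bool" where
  "stochastic_vector v \<longleftrightarrow> (\<forall>i. v i \<ge> 0) \<and> (\<Sum>i\<in>UNIV. v i) = 1"

end

theory Submission
  imports Defs "HOL-Analysis.Analysis"
begin

lemma finite_index_tuples: "finite (index_tuples m :: ('n::finite) list set)"
proof -
  have "index_tuples m = {xs::'n list. set xs \<subseteq> UNIV \<and> length xs = m}"
    by (auto simp: index_tuples_def)
  then show ?thesis using finite_lists_length_eq[of "UNIV::'n set" m] by simp
qed

lemma index_tuples_Suc: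
  "index_tuples (Suc m) = (\<lambda>(a,js). a # js) ` (UNIV \<times> (index_tuples m :: ('n::finite) list set))"
proof (rule subset_antisym)
  show "index_tuples (Suc m) \<subseteq> (\<lambda>(a,js). a # js) ` (UNIV \<times> (index_tuples m :: 'n list set))"
  proof
    fix xs :: "'n list" assume "xs \<in> index_tuples (Suc m)"
    then obtain a js where "xs = a # js" "length js = m"
      by (cases xs) (auto simp: index_tuples_def)
    then show "xs \<in> (\<lambda>(a,js). a # js) ` (UNIV \<times> (index_tuples m :: 'n list set))"
      by (force simp: index_tuples_def)
  qed
qed (auto simp: index_tuples_def)

lemma sum_prod_tuples:
  fixes x :: "('n::finite) \<Rightarrow> real"
  shows "(\<Sum>js\<in>index_tuples m. \<Prod>j\<leftarrow>js. x j) = (\<Sum>j\<in>UNIV. x j) ^ m"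
proof (induction m)
  case 0
  have "index_tuples 0 = {[]::'n list}" by (auto simp: index_tuples_def)
  then show ?case by simp
next
  case (Suc m)
  have inj: "inj_on (\<lambda>(a,js). a # js) (UNIV \<times> (index_tuples m :: 'n list set))"
    by (auto simp: inj_on_def)
  have "(\<Sum>js\<in>index_tuples (Suc m). \<Prod>j\<leftarrow>js. x j)
      = (\<Sum>p\<in>UNIV \<times> (index_tuples m :: 'n list set). x (fst p) * (\<Prod>j\<leftarrow>snd p. x j))"
    unfolding index_tuples_Suc by (subst sum.reindex[OF inj]) (auto intro!: sum.cong)
  also have "\<dots> = (\<Sum>a\<in>UNIV. \<Sum>js\<in>index_tuples m. x a * (\<Prod>j\<leftarrow>js. x j))"
    by (simp add: sum.cartesian_product split_beta)
  also have "\<dots> = (\<Sum>a\<in>UNIV. x a * (\<Sum>j\<in>UNIV. x j) ^ m)"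
    by (simp add: sum_distrib_left[symmetric] Suc)
  also have "\<dots> = (\<Sum>j\<in>UNIV. x j) ^ Suc m"
    by (simp add: sum_distrib_right[symmetric])
  finally show ?case .
qed

lemma prod_list_scale:
  "(\<Prod>j\<leftarrow>js. (s::real) * x j) = s ^ length js * (\<Prod>j\<leftarrow>js. x j)"
  by (induction js) (auto simp: algebra_simps)

lemma prod_list_nonneg': "(\<And>j. (0::real) \<le> x j) \<Longrightarrow> 0 \<le> (\<Prod>j\<leftarrow>js. x j)"
  by (induction js) auto

lemma tensor_scale:
  "tensor_apply k P (\<lambda>j. s * x j) i = s ^ (k - 1) * tensor_apply k P x i"
  unfolding tensor_apply_def
  by (simp add: sum_distrib_left prod_list_scale index_tuples_def algebra_simps)

lemma tensor_nonneg:
  assumes "columnwise_substochastic k P" "\<And>j. 0 \<le> x j"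
  shows "0 \<le> tensor_apply k P x i"
  unfolding tensor_apply_def
  using assms by (auto simp: columnwise_substochastic_def intro!: sum_nonneg mult_nonneg_nonneg prod_list_nonneg')

lemma tensor_sum_le:
  assumes "columnwise_substochastic k P" "\<And>j. 0 \<le> x j" "(\<Sum>j\<in>UNIV. x j) = 1"
  shows "(\<Sum>i\<in>UNIV. tensor_apply k P x i) \<le> 1"
proof -
  have "(\<Sum>i\<in>UNIV. tensor_apply k P x i)
      = (\<Sum>js\<in>index_tuples (k-1). (\<Sum>i\<in>UNIV. P (i # js)) * (\<Prod>j\<leftarrow>js. x j))"
    unfolding tensor_apply_def by (subst sum.swap) (simp add: sum_distrib_right)
  also have "\<dots> \<le> (\<Sum>js\<in>index_tuples (k-1). 1 * (\<Prod>j\<leftarrow>js. x j))"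
    using assms by (intro sum_mono mult_right_mono prod_list_nonneg')
      (auto simp: columnwise_substochastic_def)
  also have "\<dots> = 1" using sum_prod_tuples[of x "k-1"] assms(3) by simp
  finally show ?thesis .
qed

lemma continuous_prod_list:
  "continuous_on S (\<lambda>z::real^'n. \<Prod>j\<leftarrow>js. z $ j)"
  by (induction js) (auto intro!: continuous_intros)

lemma continuous_tensor:
  "continuous_on S (\<lambda>z::real^('n::finite). tensor_apply k P (\<lambda>j. z $ j) i)"
  unfolding tensor_apply_def
  by (intro continuous_on_sum continuous_on_mult continuous_on_const continuous_prod_list)

theorem theorem3p6:
  fixes k :: nat and P :: "('n::finite) list \<Rightarrow> real" and v :: "'n \<Rightarrow> real" and \<alpha> :: real
  assumes "k \<ge> 2"
    and "columnwise_substochastic k P"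
    and "stochastic_vector v"
    and "0 \<le> \<alpha>" and "\<alpha> < 1"
  shows "\<exists>y :: 'n \<Rightarrow> real. (\<forall>i. y i \<ge> 0) \<and> y \<noteq> (\<lambda>_. 0) \<and>
           (\<forall>i. (\<Sum>j\<in>UNIV. y j) ^ (k - 2) * y i - \<alpha> * tensor_apply k P y i = v i)"
proof -
  define c where "c z = (\<Sum>i\<in>UNIV. tensor_apply k P (\<lambda>j. z $ j) i)" for z :: "real^'n"
  define T where "T z = (\<chi> i. (1 - \<alpha> * c z) * v i + \<alpha> * tensor_apply k P (\<lambda>j. z $ j) i)"
    for z :: "real^'n"
  define S where "S = {z::real^'n. (\<forall>i. 0 \<le> z $ i) \<and> (\<Sum>i\<in>UNIV. z $ i) = 1}"
  have v: "\<And>i. 0 \<le> v i" "(\<Sum>i\<in>UNIV. v i) = 1" using assms(3) by (auto simp: stochastic_vector_def)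
  have cS: "0 \<le> c z \<and> c z \<le> 1" if "z \<in> S" for z
    using that tensor_sum_le[OF assms(2), of "\<lambda>j. z $ j"]
      tensor_nonneg[OF assms(2), of "\<lambda>j. z $ j"]
    by (auto simp: S_def c_def intro!: sum_nonneg)
  have closedS: "closed S"
    unfolding S_def
    by (intro closed_Int[of "{z. \<forall>i. 0 \<le> z $ i}" "{z. (\<Sum>i\<in>UNIV. z $ i) = 1}", simplified Collect_conj_eq[symmetric]]
        closed_positive_orthant closed_Collect_eq continuous_intros)
  have sub: "S \<subseteq> cbox 0 (\<chi> i. 1)"
  proof
    fix z assume "z \<in> S"
    then have "z $ i \<le> 1" for i
      using member_le_sum[of i UNIV "\<lambda>i. z $ i"] by (auto simp: S_def)
    with \<open>z \<in> S\<close> show "z \<in> cbox 0 (\<chi> i. 1)" by (auto simp: S_def mem_box_cart)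
  qed
  have compS: "compact S"
    using closedS sub compact_cbox closed_Int_compact[OF closedS compact_cbox] by (metis inf.absorb1)
  have convS: "convex S"
    unfolding S_def convex_def
  proof (intro allI impI ballI conjI, safe)
    fix x y :: "real^'n" and u w :: real
    assume "0 \<le> u" "0 \<le> w" "u + w = 1" "\<forall>i. 0 \<le> x $ i" "\<forall>i. 0 \<le> y $ i"
      "(\<Sum>i\<in>UNIV. x $ i) = 1" "(\<Sum>i\<in>UNIV. y $ i) = 1"
    then show "0 \<le> (u *\<^sub>R x + w *\<^sub>R y) $ i" for i by simp
    from \<open>(\<Sum>i\<in>UNIV. x $ i) = 1\<close> \<open>(\<Sum>i\<in>UNIV. y $ i) = 1\<close> \<open>u + w = 1\<close>
    show "(\<Sum>i\<in>UNIV. (u *\<^sub>R x + w *\<^sub>R y) $ i) = 1"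
      by (simp add: sum.distrib sum_distrib_left[symmetric])
  qed
  have neS: "S \<noteq> {}"
  proof -
    have "(\<chi> i. v i) \<in> S" using v by (simp add: S_def)
    then show ?thesis by blast
  qed
  have contT: "continuous_on S T"
    unfolding T_def c_def
    by (intro continuous_on_vec_lambda continuous_intros continuous_tensor)
  have TS: "T \<in> S \<rightarrow> S"
  proof
    fix z assume z: "z \<in> S"
    have "\<alpha> * c z \<le> 1" using cS[OF z] assms(4,5)
      by (metis less_eq_real_def mult_le_one)
    moreover have "0 \<le> tensor_apply k P (\<lambda>j. z $ j) i" for i
      using z by (intro tensor_nonneg[OF assms(2)]) (auto simp: S_def)
    ultimately have "0 \<le> T z $ i" for i
      using v assms(4) by (simp add: T_def)
    moreover have "(\<Sum>i\<in>UNIV. T z $ i) = 1"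
      using v by (simp add: T_def sum.distrib sum_distrib_left[symmetric] c_def)
    ultimately show "T z \<in> S" by (simp add: S_def)
  qed
  obtain x where xS: "x \<in> S" and fx: "T x = x"
    using brouwer[OF compS convS neS contT TS] by blast
  define cc where "cc = c x"
  have ac: "0 < 1 - \<alpha> * cc"
    using cS[OF xS] assms(4,5) unfolding cc_def
    by (metis diff_gt_0_iff_gt less_eq_real_def mult_less_le_imp_less mult_less_cancel_right1 mult_nonneg_nonneg mult_le_one not_less order.strict_trans1)
  define s where "s = root (k - 1) (1 / (1 - \<alpha> * cc))"
  have k1: "0 < k - 1" using assms(1) by simp
  have spos: "0 < s" using ac k1 by (simp add: s_def)
  have spow: "s ^ (k - 1) * (1 - \<alpha> * cc) = 1"
    using ac k1 by (simp add: s_def)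
  define y where "y j = s * x $ j" for j
  have xeq: "x $ i = (1 - \<alpha> * cc) * v i + \<alpha> * tensor_apply k P (\<lambda>j. x $ j) i" for i
    using arg_cong[OF fx, of "\<lambda>z. z $ i"] by (simp add: T_def cc_def)
  have sumy: "(\<Sum>j\<in>UNIV. y j) = s"
    using xS by (simp add: y_def S_def sum_distrib_left[symmetric])
  show ?thesis
  proof (intro exI conjI allI)
    show "0 \<le> y i" for i using xS spos by (simp add: y_def S_def)
    show "y \<noteq> (\<lambda>_. 0)"
    proof
      assume "y = (\<lambda>_. 0)"
      then have "(\<Sum>j\<in>UNIV. y j) = 0" by simp
      with sumy spos show False by simp
    qed
    fix i
    have pw: "s ^ (k - 2) * s = s ^ (k - 1)"
      using assms(1) by (metis Suc_diff_Suc One_nat_def Suc_1 diff_Suc_1 less_eq_Suc_le mult.commute power_Suc numeral_2_eq_2)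
    have "(\<Sum>j\<in>UNIV. y j) ^ (k - 2) * y i - \<alpha> * tensor_apply k P y i
        = s ^ (k - 1) * (x $ i - \<alpha> * tensor_apply k P (\<lambda>j. x $ j) i)"
      unfolding sumy unfolding y_def tensor_scale using pw by (simp add: algebra_simps)
    also have "\<dots> = s ^ (k - 1) * (1 - \<alpha> * cc) * v i" using xeq[of i] by simp
    also have "\<dots> = v i" using spow by simp
    finally show "(\<Sum>j\<in>UNIV. y j) ^ (k - 2) * y i - \<alpha> * tensor_apply k P y i = v i" .
  qed
qed

end
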